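(* Let $G$ be a compact abelian group with discrete dual group $\Gamma$, let $N = p_1^{n_1} \cdots p_k^{n_k}$ with distinct primes $p_i$ and $n_i \in \mathbb{N}$, and let $E \subset \Gamma$. Then $E$ is $N$-PR if and only if, for all $1 \le i \le k$, the map $\pi_{p_i^{n_i}}$ is one-to-one on $E$ and $\pi_{p_i^{n_i}}(E)$ is $p_i$-PR as a subset of $\Gamma/\Gamma_{p_i^{n_i}}$.
   Context: For a discrete abelian group $\Delta$ with compact dual $\widehat{\Delta}$ and $M \in \mathbb{N}$, a subset $E \subset \Delta$ is $M$-PR if for every function $\varphi: E \to \mathbb{Z}_M$ (the $M$-th roots of unity in the unit circle) there exists $x \in \widehat{\Delta}$ with $\varphi(\gamma) = \gamma(x)$ for all $\gamma \in E$. Let $\Gamma_0$ be the torsion subgroup of $\Gamma$; for a prime $p$ and $m \in \mathbb{N}$, $\Gamma_{p^m}$ is the subgroup of $\Gamma_0$ of elements whose order is not divisible by $p^m$, and $\pi_{p^m}: \Gamma \to \Gamma/\Gamma_{p^m}$ is the quotient map. *)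

theory Defs
  imports "HOL-Algebra.Algebra" "HOL-Analysis.Analysis"
begin

definition circle_group :: "complex monoid" where
  "circle_group = \<lparr>carrier = {z. cmod z = 1}, monoid.mult = (*), one = 1\<rparr>"

definition roots_of_unity :: "nat \<Rightarrow> complex set" where
  "roots_of_unity M = {z. z ^ M = 1}"

text \<open>For a discrete abelian group D, its dual is the group of all homomorphisms
  D \<rightarrow> circle (every character of a discrete group is continuous), and
  gamma(x) for x in the dual is x gamma.\<close>
definition M_PR :: "('a, 'b) monoid_scheme \<Rightarrow> nat \<Rightarrow> 'a set \<Rightarrow> bool" where
  "M_PR D M E \<longleftrightarrow>
     (\<forall>\<phi> \<in> E \<rightarrow> roots_of_unity M. \<exists>c \<in> hom D circle_group. \<forall>\<gamma>\<in>E. c \<gamma> = \<phi> \<gamma>)"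

definition torsion_subgroup :: "('a, 'b) monoid_scheme \<Rightarrow> 'a set" where
  "torsion_subgroup D = {x \<in> carrier D. group.ord D x \<noteq> 0}"

definition Gamma_pm :: "('a, 'b) monoid_scheme \<Rightarrow> nat \<Rightarrow> nat \<Rightarrow> 'a set" where
  "Gamma_pm D p m = {x \<in> torsion_subgroup D. \<not> (p ^ m) dvd group.ord D x}"

definition pi_pm :: "('a, 'b) monoid_scheme \<Rightarrow> nat \<Rightarrow> nat \<Rightarrow> 'a \<Rightarrow> 'a set" where
  "pi_pm D p m x = Gamma_pm D p m #>\<^bsub>D\<^esub> x"

end

theory Submission
  imports Defs
begin


lemma circle_group_group: "group circle_group"
proof (rule groupI)
  fix x assume "x \<in> carrier circle_group"
  then have "cmod x = 1" by (simp add: circle_group_def)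
  then have "x \<noteq> 0" by auto
  then show "\<exists>y\<in>carrier circle_group. y \<otimes>\<^bsub>circle_group\<^esub> x = \<one>\<^bsub>circle_group\<^esub>"
    using \<open>cmod x = 1\<close>
    by (intro bexI[of _ "inverse x"]) (auto simp: circle_group_def norm_inverse)
qed (auto simp: circle_group_def norm_mult)

lemma hom_circle_iff: "c \<in> hom G circle_group \<longleftrightarrow>
   (\<forall>x\<in>carrier G. cmod (c x) = 1) \<and> (\<forall>x\<in>carrier G. \<forall>y\<in>carrier G. c (x \<otimes>\<^bsub>G\<^esub> y) = c x * c y)"
  unfolding hom_def circle_group_def by auto

definition goodg :: "('a,'b) monoid_scheme \<Rightarrow> ('a \<times> complex) set \<Rightarrow> bool" where
 "goodg G R \<longleftrightarrow> R \<subseteq> carrier G \<times> {z. cmod z = 1} \<and> (\<one>\<^bsub>G\<^esub>, 1) \<in> R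
   \<and> (\<forall>x z y w. (x,z)\<in>R \<longrightarrow> (y,w)\<in>R \<longrightarrow> (x \<otimes>\<^bsub>G\<^esub> y, z*w) \<in> R)
   \<and> (\<forall>x z. (x,z)\<in>R \<longrightarrow> (inv\<^bsub>G\<^esub> x, inverse z) \<in> R)
   \<and> (\<forall>x z w. (x,z)\<in>R \<longrightarrow> (x,w)\<in>R \<longrightarrow> z = w)"

lemma goodgD:
  assumes "goodg G R"
  shows "R \<subseteq> carrier G \<times> {z. cmod z = 1}" "(\<one>\<^bsub>G\<^esub>, 1) \<in> R"
    "\<And>x z y w. (x,z)\<in>R \<Longrightarrow> (y,w)\<in>R \<Longrightarrow> (x \<otimes>\<^bsub>G\<^esub> y, z*w) \<in> R"
    "\<And>x z. (x,z)\<in>R \<Longrightarrow> (inv\<^bsub>G\<^esub> x, inverse z) \<in> R"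
    "\<And>x z w. (x,z)\<in>R \<Longrightarrow> (x,w)\<in>R \<Longrightarrow> z = w"
  using assms unfolding goodg_def by simp_all

context comm_group
begin

lemma goodg_pow_nat:
  assumes "goodg G R" "(y,w) \<in> R"
  shows "(y [^] (n::nat), w ^ n) \<in> R"
proof (induction n)
  case 0 then show ?case using goodgD(2)[OF assms(1)] by simp
next
  case (Suc n)
  then have "(y [^] n \<otimes> y, w ^ n * w) \<in> R" using goodgD(3)[OF assms(1)] assms(2) by blast
  then show ?case by (simp add: mult.commute)
qed

lemma goodg_pow_int:
  assumes "goodg G R" "(y,w) \<in> R"
  shows "(y [^] (t::int), w powi t) \<in> R"
proof (cases "t \<ge> 0")
  case True
  then show ?thesis using goodg_pow_nat[OF assms, of "nat t"]
    by (simp add: pow_nat power_int_def)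
next
  case False
  define n where "n = nat (- t)"
  have n: "t = - int n" using False unfolding n_def by simp
  have yc: "y \<in> carrier G" using goodgD(1)[OF assms(1)] assms(2) by blast
  have "(inv (y [^] n), inverse (w ^ n)) \<in> R"
    using goodg_pow_nat[OF assms, of n] goodgD(4)[OF assms(1)] by blast
  then show ?thesis using n yc by (simp add: int_pow_neg_int power_int_minus)
qed


lemma goodg_dom:
  assumes "goodg G R" "(y,w) \<in> R" shows "y \<in> carrier G" "cmod w = 1"
proof -
  have "(y,w) \<in> carrier G \<times> {z. cmod z = 1}" using goodgD(1)[OF assms(1)] assms(2) by (rule subsetD)
  then show "y \<in> carrier G" "cmod w = 1" by simp_all
qed

lemma exists_root_circle:
  assumes "cmod w = 1" "m > 0"
  shows "\<exists>z. cmod z = 1 \<and> z ^ m = w"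
proof -
  have w0: "w \<noteq> 0" using assms by auto
  define z where "z = exp (Ln w / of_nat m)"
  have "z ^ m = exp (of_nat m * (Ln w / of_nat m))"
    unfolding z_def by (rule exp_of_nat_mult[symmetric])
  also have "\<dots> = w" using assms w0 by simp
  finally have "z ^ m = w" .
  moreover have "cmod z = 1"
  proof -
    have "cmod z ^ m = 1" using \<open>z ^ m = w\<close> assms by (metis norm_power)
    then show ?thesis using assms(2) power_eq_imp_eq_base[of "cmod z" m 1] by simp
  qed
  ultimately show ?thesis by blast
qed

lemma goodg_step:
  assumes good: "goodg G R" and xc: "x \<in> carrier G" and xn: "x \<notin> fst ` R"
  shows "\<exists>R'. goodg G R' \<and> R \<subseteq> R' \<and> R' \<noteq> R"
proof -
  define D where "D = fst ` R"
  have Dc: "D \<subseteq> carrier G" using good unfolding D_def goodg_def by auto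
  have Dmem: "a \<in> D \<longleftrightarrow> (\<exists>w. (a,w) \<in> R)" for a unfolding D_def by force
  have Dm: "a \<otimes> b \<in> D" if "a \<in> D" "b \<in> D" for a b
    using that goodgD(3)[OF good] unfolding Dmem by blast
  have Di: "inv a \<in> D" if "a \<in> D" for a
    using that goodgD(4)[OF good] unfolding Dmem by blast
  have Dp: "a [^] (t::int) \<in> D" if "a \<in> D" for a t
    using that goodg_pow_int[OF good] unfolding Dmem by blast
  have key: "\<exists>z. cmod z = 1 \<and> (\<forall>j::int. x [^] j \<in> D \<longrightarrow> (x [^] j, z powi j) \<in> R)"
  proof (cases "\<exists>m::nat. m > 0 \<and> x [^] m \<in> D")
    case True
    define m where "m = (LEAST m::nat. m > 0 \<and> x [^] m \<in> D)"
    have m: "m > 0" "x [^] m \<in> D" using LeastI_ex[OF True] unfolding m_def by auto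
    have mmin: "\<not> (r > 0 \<and> x [^] r \<in> D)" if "r < m" for r :: nat
      using not_less_Least[of r "\<lambda>m. m > 0 \<and> x [^] m \<in> D"] that unfolding m_def by blast
    obtain w where w: "(x [^] m, w) \<in> R" using m(2) unfolding D_def by auto
    have w1: "cmod w = 1" using goodg_dom[OF good w] by simp
    obtain z where z: "cmod z = 1" "z ^ m = w" using exists_root_circle[OF w1 m(1)] by blast
    have z0: "z \<noteq> 0" using z by auto
    show ?thesis
    proof (intro exI conjI allI impI)
      show "cmod z = 1" by fact
      fix j :: int assume j: "x [^] j \<in> D"
      define t where "t = j div int m"
      define r where "r = j mod int m"
      have jr: "j = int m * t + r" unfolding t_def r_def by simp
      have r0: "0 \<le> r" "r < int m" unfolding r_def using m(1) by auto
      have xm: "x [^] (int m) = x [^] m" by (simp add: int_pow_int)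
      have "x [^] j = x [^] (int m * t) \<otimes> x [^] r" using jr xc by (simp add: int_pow_mult)
      also have "x [^] (int m * t) = (x [^] m) [^] t" using xc xm by (simp add: int_pow_pow[symmetric])
      finally have "x [^] j = (x [^] m) [^] t \<otimes> x [^] r" .
      then have "x [^] r = inv ((x [^] m) [^] t) \<otimes> x [^] j"
        using xc by (simp add: m_assoc[symmetric])
      then have xrD: "x [^] r \<in> D" using Dm Di Dp m(2) j by simp
      have "r = 0"
      proof (rule ccontr)
        assume "r \<noteq> 0"
        then have "nat r > 0" "nat r < m" using r0 by auto
        moreover have "x [^] (nat r) \<in> D" using xrD r0 by (simp add: pow_nat)
        ultimately show False using mmin by blast
      qed
      then have jt: "j = int m * t" using jr by simp
      have "((x [^] m) [^] t, w powi t) \<in> R" using goodg_pow_int[OF good w] .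
      moreover have "(x [^] m) [^] t = x [^] j" using jt xc xm by (simp add: int_pow_pow[symmetric])
      moreover have "w powi t = z powi j" using jt z(2) by (simp add: power_int_mult)
      ultimately show "(x [^] j, z powi j) \<in> R" by simp
    qed
  next
    case False
    show ?thesis
    proof (intro exI conjI allI impI)
      show "cmod (1::complex) = 1" by simp
      fix j :: int assume j: "x [^] j \<in> D"
      have "j = 0"
      proof (rule ccontr)
        assume "j \<noteq> 0"
        show False
        proof (cases "j > 0")
          case True
          then have "x [^] (nat j) \<in> D" using j by (simp add: pow_nat)
          then show False using False True by (metis zero_less_nat_eq)
        next
          case False': False
          then have "inv (x [^] j) \<in> D" using Di j by blast
          moreover have "inv (x [^] j) = x [^] (nat (-j))"
            using xc False' \<open>j \<noteq> 0\<close> by (simp add: int_pow_neg[symmetric] pow_nat)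
          ultimately show False using False False' \<open>j \<noteq> 0\<close> by (metis linorder_neqE_linordered_idom neg_0_less_iff_less zero_less_nat_eq)
        qed
      qed
      then show "(x [^] j, 1 powi j) \<in> R" using goodgD(2)[OF good] by simp
    qed
  qed
  then obtain z where z1: "cmod z = 1" and zk: "\<And>j::int. x [^] j \<in> D \<Longrightarrow> (x [^] j, z powi j) \<in> R"
    by blast
  have z0: "z \<noteq> 0" using z1 by auto
  define R' where "R' = {(a \<otimes> x [^] k, b * z powi k) | a b k. (a,b) \<in> R}"
  have "goodg G R'"
    unfolding goodg_def
  proof (intro conjI allI impI)
    show "R' \<subseteq> carrier G \<times> {z. cmod z = 1}"
      using goodgD(1)[OF good] xc z1 unfolding R'_def by (auto simp: norm_mult norm_power_int)
    show "(\<one>, 1) \<in> R'" unfolding R'_def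
      using goodgD(2)[OF good] by (auto intro!: exI[of _ "\<one>"] exI[of _ 1] exI[of _ "0::int"])
    fix u v y w
    assume uv: "(u,v) \<in> R'" and yw: "(y,w) \<in> R'"
    obtain a b k where abk: "(a,b) \<in> R" "u = a \<otimes> x [^] k" "v = b * z powi k" using uv unfolding R'_def by auto
    obtain a' b' k' where abk': "(a',b') \<in> R" "y = a' \<otimes> x [^] k'" "w = b' * z powi k'" using yw unfolding R'_def by auto
    have ac: "a \<in> carrier G" "a' \<in> carrier G" using goodg_dom[OF good] abk(1) abk'(1) by auto
    have "(a \<otimes> a', b * b') \<in> R" using goodgD(3)[OF good] abk(1) abk'(1) by blast
    moreover have "u \<otimes> y = (a \<otimes> a') \<otimes> x [^] (k + k')"
      using abk abk' ac xc by (simp add: int_pow_mult m_ac)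
    moreover have "v * w = (b * b') * z powi (k + k')"
      using abk abk' z0 by (simp add: power_int_add)
    ultimately show "(u \<otimes> y, v * w) \<in> R'" unfolding R'_def by blast
  next
    fix u v assume uv: "(u,v) \<in> R'"
    obtain a b k where abk: "(a,b) \<in> R" "u = a \<otimes> x [^] k" "v = b * z powi k" using uv unfolding R'_def by auto
    have ac: "a \<in> carrier G" using goodg_dom[OF good] abk(1) by auto
    have "(inv a, inverse b) \<in> R" using goodgD(4)[OF good] abk(1) by blast
    moreover have "inv u = inv a \<otimes> x [^] (- k)"
      using abk ac xc by (simp add: int_pow_neg inv_mult)
    moreover have "inverse v = inverse b * z powi (- k)"
      using abk by (simp add: power_int_minus)
    ultimately show "(inv u, inverse v) \<in> R'" unfolding R'_def by blast
  next
    fix u v w assume uv: "(u,v) \<in> R'" and uw: "(u,w) \<in> R'"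
    obtain a b k where abk: "(a,b) \<in> R" "u = a \<otimes> x [^] k" "v = b * z powi k" using uv unfolding R'_def by auto
    obtain a' b' k' where abk': "(a',b') \<in> R" "u = a' \<otimes> x [^] k'" "w = b' * z powi k'" using uw unfolding R'_def by auto
    have ac: "a \<in> carrier G" "a' \<in> carrier G" using goodg_dom[OF good] abk(1) abk'(1) by auto
    have b1: "cmod b = 1" "cmod b' = 1" using goodg_dom[OF good] abk(1) abk'(1) by auto
    have "(inv a, inverse b) \<in> R" using goodgD(4)[OF good] abk(1) by blast
    then have R1: "(inv a \<otimes> a', inverse b * b') \<in> R" using goodgD(3)[OF good] abk'(1) by blast
    have eq: "a \<otimes> x [^] k = a' \<otimes> x [^] k'" using abk abk' by simp
    have "x [^] (k - k') = x [^] k \<otimes> inv (x [^] k')" using xc by (simp add: int_pow_diff)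
    also have "\<dots> = inv a \<otimes> (a \<otimes> x [^] k) \<otimes> inv (x [^] k')"
      using ac xc by (simp add: m_assoc[symmetric])
    also have "\<dots> = inv a \<otimes> (a' \<otimes> x [^] k') \<otimes> inv (x [^] k')" using eq by simp
    also have "\<dots> = inv a \<otimes> a'" using ac xc by (simp add: m_assoc)
    finally have xe: "x [^] (k - k') = inv a \<otimes> a'" .
    have "x [^] (k - k') \<in> D" using R1 xe unfolding D_def by (metis fst_conv image_eqI)
    then have "(x [^] (k - k'), z powi (k - k')) \<in> R" by (rule zk)
    then have "z powi (k - k') = inverse b * b'" using R1 xe goodgD(5)[OF good] by metis
    then have "z powi k = z powi k' * (inverse b * b')"
      using z0 by (metis diff_add_cancel power_int_add mult.commute)
    moreover have "b \<noteq> 0" using b1 by auto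
    ultimately show "v = w" using abk(3) abk'(3)
      by (simp add: field_simps)
  qed
  moreover have "R \<subseteq> R'"
  proof
    fix p assume "p \<in> R"
    then obtain a b where "p = (a,b)" "(a,b) \<in> R" by (cases p) auto
    moreover have "a \<in> carrier G" using goodg_dom[OF good] calculation(2) by auto
    ultimately show "p \<in> R'" unfolding R'_def
      by (auto intro!: exI[of _ a] exI[of _ b] exI[of _ "0::int"])
  qed
  moreover have "(x, z) \<in> R'"
  proof -
    have "(\<one> \<otimes> x [^] (1::int), 1 * z powi 1) \<in> R'"
      unfolding R'_def using goodgD(2)[OF good] by blast
    then show ?thesis using xc by simp
  qed
  then have "R' \<noteq> R" using xn by (metis fst_conv image_eqI)
  ultimately show ?thesis by blast
qed

lemma extend_char:
  assumes good0: "goodg G R0"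
  shows "\<exists>c\<in>hom G circle_group. \<forall>(x,z)\<in>R0. c x = z"
proof -
  define A where "A = {R. goodg G R \<and> R0 \<subseteq> R}"
  have "\<forall>CC\<in>chains A. \<exists>UU\<in>A. \<forall>XX\<in>CC. XX \<subseteq> UU"
  proof
    fix C assume C: "C \<in> chains A"
    show "\<exists>UU\<in>A. \<forall>XX\<in>C. XX \<subseteq> UU"
    proof (cases "C = {}")
      case True then show ?thesis using good0 unfolding A_def by auto
    next
      case False
      have chA: "C \<subseteq> A" and ch: "\<And>S1 S2. S1\<in>C \<Longrightarrow> S2\<in>C \<Longrightarrow> S1 \<subseteq> S2 \<or> S2 \<subseteq> S1"
        using C unfolding chains_def chain_subset_def by auto
      have gX: "goodg G S1" if "S1 \<in> C" for S1 using chA that unfolding A_def by auto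
      have "goodg G (\<Union>C)" unfolding goodg_def
      proof (intro conjI allI impI)
        show "\<Union>C \<subseteq> carrier G \<times> {z. cmod z = 1}"
        proof
          fix p assume "p \<in> \<Union>C"
          then obtain S1 where "S1 \<in> C" "p \<in> S1" by blast
          then show "p \<in> carrier G \<times> {z. cmod z = 1}" using goodgD(1)[OF gX] by blast
        qed
        obtain S1 where S1: "S1 \<in> C" using False by blast
        show "(\<one>, 1) \<in> \<Union>C" using goodgD(2)[OF gX[OF S1]] S1 by blast
      next
        fix x z y w assume a: "(x,z) \<in> \<Union>C" "(y,w) \<in> \<Union>C"
        then obtain S1 S2 where XY: "S1 \<in> C" "S2 \<in> C" "(x,z) \<in> S1" "(y,w) \<in> S2" by blast
        show "(x \<otimes> y, z * w) \<in> \<Union>C"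
        proof (cases "S1 \<subseteq> S2")
          case True then show ?thesis using goodgD(3)[OF gX[OF XY(2)]] XY by blast
        next
          case False then have "S2 \<subseteq> S1" using ch XY by blast
          then show ?thesis using goodgD(3)[OF gX[OF XY(1)]] XY by blast
        qed
      next
        fix x z assume "(x,z) \<in> \<Union>C"
        then obtain S1 where "S1 \<in> C" "(x,z) \<in> S1" by blast
        then show "(inv x, inverse z) \<in> \<Union>C" using goodgD(4)[OF gX] by blast
      next
        fix x z w assume a: "(x,z) \<in> \<Union>C" "(x,w) \<in> \<Union>C"
        then obtain S1 S2 where XY: "S1 \<in> C" "S2 \<in> C" "(x,z) \<in> S1" "(x,w) \<in> S2" by blast
        show "z = w"
        proof (cases "S1 \<subseteq> S2")
          case True then show ?thesis using goodgD(5)[OF gX[OF XY(2)]] XY by blast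
        next
          case False then have "S2 \<subseteq> S1" using ch XY by blast
          then show ?thesis using goodgD(5)[OF gX[OF XY(1)]] XY by blast
        qed
      qed
      moreover have "R0 \<subseteq> \<Union>C" using chA False unfolding A_def by blast
      ultimately show ?thesis unfolding A_def by blast
    qed
  qed
  from Zorn_Lemma2[OF this] obtain M where MA: "M \<in> A" and Mmax: "\<And>S1. S1 \<in> A \<Longrightarrow> M \<subseteq> S1 \<Longrightarrow> S1 = M"
    by blast
  have gM: "goodg G M" and R0M: "R0 \<subseteq> M" using MA unfolding A_def by auto
  have dom: "\<exists>z. (x,z) \<in> M" if xc: "x \<in> carrier G" for x
  proof (rule ccontr)
    assume "\<nexists>z. (x,z) \<in> M"
    then have "x \<notin> fst ` M" by force
    from goodg_step[OF gM xc this] obtain R' where "goodg G R'" "M \<subseteq> R'" "R' \<noteq> M" by blast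
    moreover then have "R' \<in> A" using R0M unfolding A_def by auto
    ultimately show False using Mmax by blast
  qed
  define c where "c x = (THE z. (x,z) \<in> M)" for x
  have cv: "c x = z" if "(x,z) \<in> M" for x z
    unfolding c_def using that goodgD(5)[OF gM] by (intro the_equality) auto
  have cM: "(x, c x) \<in> M" if "x \<in> carrier G" for x
    using dom[OF that] cv by auto
  have "c \<in> hom G circle_group"
    unfolding hom_circle_iff
  proof (intro conjI ballI)
    fix x assume "x \<in> carrier G"
    then show "cmod (c x) = 1" using goodg_dom(2)[OF gM cM] by blast
  next
    fix x y assume "x \<in> carrier G" "y \<in> carrier G"
    then have "(x \<otimes> y, c x * c y) \<in> M" using goodgD(3)[OF gM] cM by blast
    then show "c (x \<otimes> y) = c x * c y" by (rule cv)
  qed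
  moreover have "\<forall>(x,z)\<in>R0. c x = z" using R0M cv by blast
  ultimately show ?thesis by blast
qed

end



definition isupp :: "('a \<Rightarrow> int) \<Rightarrow> 'a set" where "isupp a = {x. a x \<noteq> 0}"

definition lc :: "('a,'b) monoid_scheme \<Rightarrow> ('a \<Rightarrow> int) \<Rightarrow> 'a" where
  "lc G a = finprod G (\<lambda>x. x [^]\<^bsub>G\<^esub> a x) (isupp a)"

definition fsE :: "'a set \<Rightarrow> ('a \<Rightarrow> int) \<Rightarrow> bool" where
  "fsE E a \<longleftrightarrow> finite (isupp a) \<and> isupp a \<subseteq> E"

definition cprod :: "('a \<Rightarrow> complex) \<Rightarrow> ('a \<Rightarrow> int) \<Rightarrow> complex" where
  "cprod f a = (\<Prod>x\<in>isupp a. f x powi a x)"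

lemma fsE_add:
  assumes "fsE E a" "fsE E b" shows "fsE E (\<lambda>x. a x + b x)"
proof -
  have s: "isupp (\<lambda>x. a x + b x) \<subseteq> isupp a \<union> isupp b" by (auto simp: isupp_def)
  have "finite (isupp a \<union> isupp b)" "isupp a \<union> isupp b \<subseteq> E" using assms unfolding fsE_def by auto
  then show ?thesis using s finite_subset unfolding fsE_def by blast
qed

lemma fsE_smult:
  assumes "fsE E a" shows "fsE E (\<lambda>x. t * a x)"
proof -
  have s: "isupp (\<lambda>x. t * a x) \<subseteq> isupp a" by (auto simp: isupp_def)
  then show ?thesis using assms finite_subset unfolding fsE_def by blast
qed

lemma fsE_single: "g \<in> E \<Longrightarrow> fsE E (\<lambda>x. if x = g then 1 else 0)"
  unfolding fsE_def isupp_def by auto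

lemma fsE_zero: "fsE E (\<lambda>x. 0)"
  unfolding fsE_def isupp_def by auto

lemma cprod_super:
  assumes "finite S" "isupp a \<subseteq> S"
  shows "cprod f a = (\<Prod>x\<in>S. f x powi a x)"
  unfolding cprod_def
  by (rule prod.mono_neutral_left) (use assms in \<open>auto simp: isupp_def\<close>)

lemma cprod_add:
  assumes "finite (isupp a)" "finite (isupp b)" "\<And>x. x \<in> isupp a \<union> isupp b \<Longrightarrow> f x \<noteq> 0"
  shows "cprod f (\<lambda>x. a x + b x) = cprod f a * cprod f b"
proof -
  let ?S = "isupp a \<union> isupp b"
  have fin: "finite ?S" using assms by simp
  have "cprod f (\<lambda>x. a x + b x) = (\<Prod>x\<in>?S. f x powi (a x + b x))"
    by (rule cprod_super[OF fin]) (auto simp: isupp_def)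
  also have "\<dots> = (\<Prod>x\<in>?S. f x powi a x * f x powi b x)"
    by (rule prod.cong) (use assms(3) in \<open>auto simp: power_int_add\<close>)
  also have "\<dots> = cprod f a * cprod f b"
    by (simp add: prod.distrib cprod_super[OF fin])
  finally show ?thesis .
qed

lemma prod_powi:
  fixes g :: "'a \<Rightarrow> complex"
  assumes "finite S"
  shows "(\<Prod>x\<in>S. g x powi t) = (\<Prod>x\<in>S. g x) powi t"
  using assms by (induction S rule: finite_induct) (simp_all add: power_int_mult_distrib)

lemma cprod_smult:
  assumes "finite (isupp a)"
  shows "cprod f (\<lambda>x. t * a x) = cprod f a powi t"
proof -
  have "cprod f (\<lambda>x. t * a x) = (\<Prod>x\<in>isupp a. f x powi (t * a x))"
    by (rule cprod_super[OF assms]) (auto simp: isupp_def)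
  also have "\<dots> = (\<Prod>x\<in>isupp a. (f x powi a x) powi t)"
    by (rule prod.cong[OF refl]) (metis power_int_mult mult.commute)
  also have "\<dots> = cprod f a powi t"
    unfolding cprod_def using prod_powi[OF assms] .
  finally show ?thesis .
qed

lemma cprod_single: "cprod f (\<lambda>x. if x = g then 1 else 0) = f g"
proof -
  have "isupp (\<lambda>x. if x = g then (1::int) else 0) = {g}" by (auto simp: isupp_def)
  then show ?thesis unfolding cprod_def by simp
qed

lemma cprod_zero: "cprod f (\<lambda>x. 0) = 1"
  unfolding cprod_def isupp_def by simp

lemma cprod_norm:
  assumes "\<And>x. x \<in> isupp a \<Longrightarrow> cmod (f x) = 1"
  shows "cmod (cprod f a) = 1"
  unfolding cprod_def prod_norm[symmetric] using assms
  by (simp add: norm_power_int)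

context comm_group
begin

lemma finprod_int_pow:
  assumes "finite S" "f \<in> S \<rightarrow> carrier G"
  shows "finprod G (\<lambda>x. f x [^] (t::int)) S = finprod G f S [^] t"
  using assms
proof (induction S rule: finite_induct)
  case empty then show ?case by simp
next
  case (insert y S)
  then have fy: "f y \<in> carrier G" and fS: "f \<in> S \<rightarrow> carrier G" by auto
  have "finprod G (\<lambda>x. f x [^] t) (insert y S) = f y [^] t \<otimes> finprod G (\<lambda>x. f x [^] t) S"
    using insert fy fS by (intro finprod_insert) auto
  also have "\<dots> = f y [^] t \<otimes> finprod G f S [^] t" using insert fS by simp
  also have "\<dots> = (f y \<otimes> finprod G f S) [^] t" using fy fS by (simp add: int_pow_distrib)
  also have "\<dots> = finprod G f (insert y S) [^] t" using insert fy fS by simp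
  finally show ?case .
qed

lemma lc_super:
  assumes "finite S" "isupp a \<subseteq> S" "S \<subseteq> carrier G"
  shows "lc G a = finprod G (\<lambda>x. x [^] a x) S"
  unfolding lc_def
  by (rule finprod_mono_neutral_cong_left) (use assms in \<open>auto simp: isupp_def\<close>)

lemma lc_closed: "fsE E a \<Longrightarrow> E \<subseteq> carrier G \<Longrightarrow> lc G a \<in> carrier G"
  unfolding lc_def fsE_def by (intro finprod_closed) auto

lemma lc_add:
  assumes "fsE E a" "fsE E b" "E \<subseteq> carrier G"
  shows "lc G (\<lambda>x. a x + b x) = lc G a \<otimes> lc G b"
proof -
  let ?S = "isupp a \<union> isupp b"
  have fin: "finite ?S" and SE: "?S \<subseteq> carrier G" using assms unfolding fsE_def by auto
  have "lc G (\<lambda>x. a x + b x) = finprod G (\<lambda>x. x [^] (a x + b x)) ?S"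
    by (rule lc_super[OF fin _ SE]) (auto simp: isupp_def)
  also have "\<dots> = finprod G (\<lambda>x. x [^] a x \<otimes> x [^] b x) ?S"
    by (rule finprod_cong') (use SE in \<open>auto simp: int_pow_mult\<close>)
  also have "\<dots> = lc G a \<otimes> lc G b"
    using SE by (simp add: lc_super[OF fin _ SE] Pi_def subset_iff)
  finally show ?thesis .
qed

lemma lc_smult:
  assumes "fsE E a" "E \<subseteq> carrier G"
  shows "lc G (\<lambda>x. t * a x) = lc G a [^] t"
proof -
  have fin: "finite (isupp a)" and SE: "isupp a \<subseteq> carrier G" using assms unfolding fsE_def by auto
  have "lc G (\<lambda>x. t * a x) = finprod G (\<lambda>x. x [^] (t * a x)) (isupp a)"
    by (rule lc_super[OF fin _ SE]) (auto simp: isupp_def)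
  also have "\<dots> = finprod G (\<lambda>x. (x [^] a x) [^] t) (isupp a)"
    by (rule finprod_cong') (use SE in \<open>auto simp: int_pow_pow mult.commute\<close>)
  also have "\<dots> = lc G a [^] t"
    unfolding lc_def using fin SE by (intro finprod_int_pow) auto
  finally show ?thesis .
qed

lemma lc_neg:
  assumes "fsE E a" "E \<subseteq> carrier G"
  shows "lc G (\<lambda>x. - a x) = inv (lc G a)"
  using lc_smult[OF assms, of "-1"] lc_closed[OF assms] by (simp add: int_pow_neg)

lemma lc_single: "g \<in> carrier G \<Longrightarrow> lc G (\<lambda>x. if x = g then 1 else 0) = g"
proof -
  assume g: "g \<in> carrier G"
  have "isupp (\<lambda>x. if x = g then (1::int) else 0) = {g}" by (auto simp: isupp_def)
  then show ?thesis unfolding lc_def using g by simp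
qed

lemma lc_zero: "lc G (\<lambda>x. 0) = \<one>"
  unfolding lc_def isupp_def by simp

lemma hom_circleD:
  assumes "c \<in> hom G circle_group"
  shows "\<And>x. x \<in> carrier G \<Longrightarrow> cmod (c x) = 1"
    "\<And>x y. x \<in> carrier G \<Longrightarrow> y \<in> carrier G \<Longrightarrow> c (x \<otimes> y) = c x * c y"
  using assms unfolding hom_circle_iff by blast+

lemma circ_hom_one: "c \<in> hom G circle_group \<Longrightarrow> c \<one> = 1"
proof -
  assume c: "c \<in> hom G circle_group"
  have "c (\<one> \<otimes> \<one>) = c \<one> * c \<one>" using hom_circleD(2)[OF c one_closed one_closed] .
  then have "c \<one> = c \<one> * c \<one>" by simp
  moreover have "c \<one> \<noteq> 0" using hom_circleD(1)[OF c one_closed] by auto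
  ultimately show ?thesis by simp
qed

lemma circ_hom_inv: "c \<in> hom G circle_group \<Longrightarrow> x \<in> carrier G \<Longrightarrow> c (inv x) = inverse (c x)"
proof -
  assume c: "c \<in> hom G circle_group" and x: "x \<in> carrier G"
  have "c (x \<otimes> inv x) = c x * c (inv x)" using hom_circleD(2)[OF c x inv_closed[OF x]] .
  then have "c x * c (inv x) = 1" using x circ_hom_one[OF c] by simp
  then have "inverse (c x) = c (inv x)" by (rule inverse_unique)
  then show ?thesis by simp
qed

lemma circ_hom_nat_pow: "c \<in> hom G circle_group \<Longrightarrow> x \<in> carrier G \<Longrightarrow> c (x [^] (n::nat)) = c x ^ n"
proof (induction n)
  case 0 then show ?case using circ_hom_one by simp
next
  case (Suc n)
  then show ?case using hom_circleD(2)[OF Suc.prems(1) nat_pow_closed[OF Suc.prems(2)] Suc.prems(2)]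
    by (simp add: mult.commute)
qed

lemma circ_hom_int_pow: "c \<in> hom G circle_group \<Longrightarrow> x \<in> carrier G \<Longrightarrow> c (x [^] (k::int)) = c x powi k"
proof -
  assume c: "c \<in> hom G circle_group" and x: "x \<in> carrier G"
  show ?thesis
  proof (cases "k \<ge> 0")
    case True
    have e1: "x [^] (nat k) = x [^] k" using pow_nat[OF True] .
    have e2: "c x ^ nat k = c x powi k" using True unfolding power_int_def by simp
    show ?thesis using circ_hom_nat_pow[OF c x, of "nat k"] unfolding e1 e2 .
  next
    case False
    then have F: "k < 0" by simp
    have e1: "inv (x [^] (nat (-k))) = x [^] k" using F unfolding int_pow_def2[of G x k] by simp
    have e2: "inverse (c x ^ nat (-k)) = c x powi k" using F unfolding power_int_def power_inverse by simp
    show ?thesis using circ_hom_inv[OF c nat_pow_closed[OF x], of "nat (-k)"] circ_hom_nat_pow[OF c x, of "nat (-k)"]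
      unfolding e1 e2[symmetric] by simp
  qed
qed

lemma circ_hom_finprod:
  assumes c: "c \<in> hom G circle_group" and "finite S" "f \<in> S \<rightarrow> carrier G"
  shows "c (finprod G f S) = (\<Prod>x\<in>S. c (f x))"
  using assms(2,3)
proof (induction S rule: finite_induct)
  case empty then show ?case using circ_hom_one[OF c] by simp
next
  case (insert y S)
  then have fy: "f y \<in> carrier G" and fS: "f \<in> S \<rightarrow> carrier G" by auto
  have "c (finprod G f (insert y S)) = c (f y \<otimes> finprod G f S)" using insert fy fS by simp
  also have "\<dots> = c (f y) * c (finprod G f S)" using hom_circleD(2)[OF c] fy fS by simp
  finally show ?case using insert fS by simp
qed

lemma circ_hom_lc:
  assumes c: "c \<in> hom G circle_group" and "fsE E a" "E \<subseteq> carrier G"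
  shows "c (lc G a) = cprod c a"
proof -
  have fin: "finite (isupp a)" and SE: "isupp a \<subseteq> carrier G" using assms unfolding fsE_def by auto
  show ?thesis unfolding lc_def cprod_def
    using circ_hom_finprod[OF c fin, of "\<lambda>x. x [^] a x"] SE
    by (auto simp: circ_hom_int_pow[OF c] subset_iff intro!: prod.cong)
qed

end



definition PRH :: "('a,'b) monoid_scheme \<Rightarrow> nat \<Rightarrow> 'a set \<Rightarrow> 'a set \<Rightarrow> bool" where
  "PRH G M H E \<longleftrightarrow> (\<forall>\<phi>\<in>E \<rightarrow> roots_of_unity M. \<exists>c\<in>hom G circle_group. (\<forall>h\<in>H. c h = 1) \<and> (\<forall>g\<in>E. c g = \<phi> g))"

definition Rel :: "('a,'b) monoid_scheme \<Rightarrow> nat \<Rightarrow> 'a set \<Rightarrow> 'a set \<Rightarrow> bool" where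
  "Rel G M H E \<longleftrightarrow> (\<forall>a. fsE E a \<longrightarrow> lc G a \<in> H \<longrightarrow> (\<forall>g. int M dvd a g))"

lemma root_norm:
  assumes "z ^ M = 1" "M > 0" shows "cmod z = 1"
proof -
  have "cmod z ^ M = 1 ^ M" using assms by (metis norm_power norm_one power_one)
  then show ?thesis using assms(2) power_eq_imp_eq_base[of "cmod z" M 1] by simp
qed

lemma root_powi:
  fixes z :: complex
  assumes "z ^ M = 1" "int M dvd j" shows "z powi j = 1"
proof -
  obtain t where "j = int M * t" using assms(2) by (elim dvdE)
  then have "z powi j = (z powi int M) powi t" using power_int_mult[of z "int M" t] by simp
  also have "\<dots> = 1" using assms(1) by simp
  finally show ?thesis .
qed

lemma omega_props:
  assumes "M > 0"
  defines "\<omega> \<equiv> exp (2 * of_real pi * \<i> / of_nat M)"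
  shows "\<omega> ^ M = 1" "\<And>j. \<omega> powi j = 1 \<Longrightarrow> int M dvd j"
proof -
  have "\<omega> ^ M = exp (of_nat M * (2 * of_real pi * \<i> / of_nat M))"
    unfolding \<omega>_def by (rule exp_of_nat_mult[symmetric])
  also have "\<dots> = exp (2 * of_real pi * \<i>)" using assms by simp
  also have "\<dots> = 1" by simp
  finally show "\<omega> ^ M = 1" .
  fix j :: int assume j: "\<omega> powi j = 1"
  have "\<omega> powi j = exp (of_int j * (2 * of_real pi * \<i> / of_nat M))"
    unfolding \<omega>_def by (rule exp_power_int)
  then have "exp (of_int j * (2 * of_real pi * \<i> / of_nat M)) = 1" using j by simp
  then obtain n :: int where n: "Im (of_int j * (2 * of_real pi * \<i> / of_nat M)) = of_int (2 * n) * pi"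
    unfolding exp_eq_1 by blast
  have "Im (of_int j * (2 * of_real pi * \<i> / of_nat M)) = 2 * pi * of_int j / of_nat M"
    by simp
  with n have "2 * pi * of_int j / of_nat M = of_int (2 * n) * pi" by simp
  then have "of_int j = (of_int (n * int M) :: real)" using assms pi_gt_zero
    by (simp add: field_simps)
  then have "j = n * int M" by (simp only: of_int_eq_iff)
  then show "int M dvd j" by simp
qed

context comm_group
begin

lemma PRH_imp_Rel:
  assumes E: "E \<subseteq> carrier G" and M: "M > 0" and P: "PRH G M H E"
  shows "Rel G M H E"
  unfolding Rel_def
proof (intro allI impI)
  fix a g assume fa: "fsE E a" and aH: "lc G a \<in> H"
  show "int M dvd a g"
  proof (cases "a g = 0")
    case True then show ?thesis by simp
  next
    case False
    then have gS: "g \<in> isupp a" by (simp add: isupp_def)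
    have fin: "finite (isupp a)" and SE: "isupp a \<subseteq> E" using fa unfolding fsE_def by auto
    define \<omega> where "\<omega> = exp (2 * of_real pi * \<i> / of_nat M)"
    note om = omega_props[OF M, folded \<omega>_def]
    define \<phi> where "\<phi> x = (if x = g then \<omega> else 1)" for x
    have "\<phi> \<in> E \<rightarrow> roots_of_unity M" using om(1) unfolding \<phi>_def roots_of_unity_def by auto
    then obtain c where c: "c \<in> hom G circle_group" "\<forall>h\<in>H. c h = 1" "\<forall>x\<in>E. c x = \<phi> x"
      using P unfolding PRH_def by blast
    have "1 = c (lc G a)" using c(2) aH by simp
    also have "\<dots> = cprod c a" by (rule circ_hom_lc[OF c(1) fa E])
    also have "\<dots> = (\<Prod>x\<in>isupp a. \<phi> x powi a x)"
      unfolding cprod_def using c(3) SE by (intro prod.cong) auto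
    also have "\<dots> = (\<Prod>x\<in>isupp a. if x = g then \<omega> powi a g else 1)"
      unfolding \<phi>_def by (intro prod.cong) auto
    also have "\<dots> = \<omega> powi a g" using fin gS by (simp add: prod.delta)
    finally show ?thesis using om(2) by simp
  qed
qed

lemma fsE_neg: "fsE E a \<Longrightarrow> fsE E (\<lambda>x. - a x)"
  using fsE_smult[of E a "-1"] by simp

lemma Rel_imp_PRH:
  assumes E: "E \<subseteq> carrier G" and M: "M > 0" and H: "subgroup H G" and R: "Rel G M H E"
  shows "PRH G M H E"
  unfolding PRH_def
proof (intro ballI)
  fix \<phi> assume \<phi>: "\<phi> \<in> E \<rightarrow> roots_of_unity M"
  have \<phi>1: "cmod (\<phi> x) = 1" if "x \<in> E" for x
    using \<phi> that M root_norm unfolding roots_of_unity_def by blast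
  have \<phi>0: "\<phi> x \<noteq> 0" if "x \<in> E" for x using \<phi>1[OF that] by auto
  have Hc: "H \<subseteq> carrier G" using H by (rule subgroup.subset)
  have Phi1: "cprod \<phi> a = 1" if fa: "fsE E a" and dv: "\<forall>g. int M dvd a g" for a
    unfolding cprod_def
  proof (rule prod.neutral, rule ballI)
    fix x assume "x \<in> isupp a"
    then have "x \<in> E" using fa unfolding fsE_def by auto
    then have "\<phi> x ^ M = 1" using \<phi> unfolding roots_of_unity_def by auto
    then show "\<phi> x powi a x = 1" using dv root_powi by blast
  qed
  have Phiadd: "cprod \<phi> (\<lambda>x. a x + b x) = cprod \<phi> a * cprod \<phi> b" if fa: "fsE E a" and fb: "fsE E b" for a b
    using fa fb \<phi>0 unfolding fsE_def by (intro cprod_add) auto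
  have Phineg: "cprod \<phi> (\<lambda>x. - a x) = inverse (cprod \<phi> a)" if fa: "fsE E a" for a
    using cprod_smult[of a \<phi> "-1"] fa unfolding fsE_def by (simp add: power_int_minus)
  define R0 where "R0 = {(lc G a \<otimes> h, cprod \<phi> a) | a h. fsE E a \<and> h \<in> H}"
  have "goodg G R0"
    unfolding goodg_def
  proof (intro conjI allI impI)
    show "R0 \<subseteq> carrier G \<times> {z. cmod z = 1}"
    proof
      fix p assume "p \<in> R0"
      then obtain a h where p: "p = (lc G a \<otimes> h, cprod \<phi> a)" "fsE E a" "h \<in> H" unfolding R0_def by blast
      have "lc G a \<otimes> h \<in> carrier G" using lc_closed[OF p(2) E] p(3) Hc by blast
      moreover have "cmod (cprod \<phi> a) = 1"
        using p(2) \<phi>1 unfolding fsE_def by (intro cprod_norm) auto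
      ultimately show "p \<in> carrier G \<times> {z. cmod z = 1}" using p(1) by simp
    qed
  next
    have "(lc G (\<lambda>x. 0) \<otimes> \<one>, cprod \<phi> (\<lambda>x. 0)) \<in> R0"
      unfolding R0_def using fsE_zero subgroup.one_closed[OF H] by blast
    then show "(\<one>, 1) \<in> R0" by (simp add: lc_zero cprod_zero)
  next
    fix u v y w assume uv: "(u,v) \<in> R0" and yw: "(y,w) \<in> R0"
    obtain a h where p: "u = lc G a \<otimes> h" "v = cprod \<phi> a" "fsE E a" "h \<in> H" using uv unfolding R0_def by blast
    obtain b h' where q: "y = lc G b \<otimes> h'" "w = cprod \<phi> b" "fsE E b" "h' \<in> H" using yw unfolding R0_def by blast
    have hc: "h \<in> carrier G" "h' \<in> carrier G" using p q Hc by auto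
    have lcc: "lc G a \<in> carrier G" "lc G b \<in> carrier G" using lc_closed[OF p(3) E] lc_closed[OF q(3) E] by auto
    have "u \<otimes> y = lc G (\<lambda>x. a x + b x) \<otimes> (h \<otimes> h')"
      using p q hc lcc by (simp add: lc_add[OF p(3) q(3) E] m_ac)
    moreover have "v * w = cprod \<phi> (\<lambda>x. a x + b x)" using p q Phiadd by simp
    moreover have "fsE E (\<lambda>x. a x + b x)" using fsE_add p(3) q(3) by blast
    moreover have "h \<otimes> h' \<in> H" using subgroup.m_closed[OF H] p(4) q(4) by blast
    ultimately show "(u \<otimes> y, v * w) \<in> R0" unfolding R0_def by blast
  next
    fix u v assume uv: "(u,v) \<in> R0"
    obtain a h where p: "u = lc G a \<otimes> h" "v = cprod \<phi> a" "fsE E a" "h \<in> H" using uv unfolding R0_def by blast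
    have hc: "h \<in> carrier G" using p Hc by auto
    have lcc: "lc G a \<in> carrier G" using lc_closed[OF p(3) E] by auto
    have "inv u = lc G (\<lambda>x. - a x) \<otimes> inv h"
      using p hc lcc by (simp add: lc_neg[OF p(3) E] inv_mult)
    moreover have "inverse v = cprod \<phi> (\<lambda>x. - a x)" using p Phineg by simp
    moreover have "fsE E (\<lambda>x. - a x)" using fsE_neg p(3) by blast
    moreover have "inv h \<in> H" using subgroup.m_inv_closed[OF H] p(4) by blast
    ultimately show "(inv u, inverse v) \<in> R0" unfolding R0_def by blast
  next
    fix u v w assume uv: "(u,v) \<in> R0" and uw: "(u,w) \<in> R0"
    obtain a h where p: "u = lc G a \<otimes> h" "v = cprod \<phi> a" "fsE E a" "h \<in> H" using uv unfolding R0_def by blast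
    obtain b h' where q: "u = lc G b \<otimes> h'" "w = cprod \<phi> b" "fsE E b" "h' \<in> H" using uw unfolding R0_def by blast
    have hc: "h \<in> carrier G" "h' \<in> carrier G" using p q Hc by auto
    have lcc: "lc G a \<in> carrier G" "lc G b \<in> carrier G" using lc_closed[OF p(3) E] lc_closed[OF q(3) E] by auto
    define d where "d = (\<lambda>x. a x + - b x)"
    have fnb: "fsE E (\<lambda>x. - b x)" using fsE_neg q(3) by blast
    have fd: "fsE E d" unfolding d_def using fsE_add[OF p(3) fnb] .
    have "lc G d = lc G a \<otimes> inv (lc G b)"
      unfolding d_def using lc_add[OF p(3) fnb E] lc_neg[OF q(3) E] by simp
    also have "\<dots> = (lc G a \<otimes> h) \<otimes> inv h \<otimes> inv (lc G b)"
      using hc lcc by (simp add: m_assoc)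
    also have "\<dots> = (lc G b \<otimes> h') \<otimes> inv h \<otimes> inv (lc G b)"
      using p(1) q(1) by simp
    also have "\<dots> = h' \<otimes> inv h \<otimes> (lc G b \<otimes> inv (lc G b))"
      using hc lcc by (simp add: m_ac)
    also have "\<dots> = h' \<otimes> inv h" using hc lcc by simp
    finally have "lc G d \<in> H" using subgroup.m_closed[OF H] subgroup.m_inv_closed[OF H] p(4) q(4) by simp
    then have dv: "\<forall>g. int M dvd d g" using R fd unfolding Rel_def by blast
    have "a = (\<lambda>x. b x + d x)" unfolding d_def by auto
    then have "cprod \<phi> a = cprod \<phi> b * cprod \<phi> d" using Phiadd[OF q(3) fd] by simp
    also have "\<dots> = cprod \<phi> b" using Phi1[OF fd dv] by simp
    finally show "v = w" using p(2) q(2) by simp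
  qed
  from extend_char[OF this] obtain c where c: "c \<in> hom G circle_group" "\<forall>(x,z)\<in>R0. c x = z" by blast
  have cR: "c x = z" if "(x,z) \<in> R0" for x z using c(2) that by auto
  show "\<exists>c\<in>hom G circle_group. (\<forall>h\<in>H. c h = 1) \<and> (\<forall>g\<in>E. c g = \<phi> g)"
  proof (intro bexI[OF _ c(1)] conjI ballI)
    fix h assume h: "h \<in> H"
    have "(lc G (\<lambda>x. 0) \<otimes> h, cprod \<phi> (\<lambda>x. 0)) \<in> R0"
      unfolding R0_def using fsE_zero h by blast
    then have "c (lc G (\<lambda>x. 0) \<otimes> h) = cprod \<phi> (\<lambda>x. 0)" by (rule cR)
    then show "c h = 1" using h Hc by (auto simp: lc_zero cprod_zero)
  next
    fix g assume g: "g \<in> E"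
    have "(lc G (\<lambda>x. if x = g then 1 else 0) \<otimes> \<one>, cprod \<phi> (\<lambda>x. if x = g then 1 else 0)) \<in> R0"
      unfolding R0_def using fsE_single[OF g] subgroup.one_closed[OF H] by blast
    then have "c (lc G (\<lambda>x. if x = g then 1 else 0) \<otimes> \<one>) = cprod \<phi> (\<lambda>x. if x = g then 1 else 0)"
      by (rule cR)
    then show "c g = \<phi> g" using g E by (auto simp: lc_single cprod_single)
  qed
qed

lemma PRH_iff_Rel:
  assumes "E \<subseteq> carrier G" "M > 0" "subgroup H G"
  shows "PRH G M H E \<longleftrightarrow> Rel G M H E"
  using PRH_imp_Rel Rel_imp_PRH assms by blast

end



lemma hom_circle_one_gen:
  assumes K: "monoid K" and c: "c \<in> hom K circle_group"
  shows "c \<one>\<^bsub>K\<^esub> = 1"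
proof -
  have o: "\<one>\<^bsub>K\<^esub> \<in> carrier K" using monoid.one_closed[OF K] .
  have "c (\<one>\<^bsub>K\<^esub> \<otimes>\<^bsub>K\<^esub> \<one>\<^bsub>K\<^esub>) = c \<one>\<^bsub>K\<^esub> * c \<one>\<^bsub>K\<^esub>"
    using c o unfolding hom_circle_iff by blast
  then have "c \<one>\<^bsub>K\<^esub> = c \<one>\<^bsub>K\<^esub> * c \<one>\<^bsub>K\<^esub>" using monoid.l_one[OF K o] by simp
  moreover have "cmod (c \<one>\<^bsub>K\<^esub>) = 1" using c o unfolding hom_circle_iff by blast
  then have "c \<one>\<^bsub>K\<^esub> \<noteq> 0" by auto
  ultimately show ?thesis by simp
qed

lemma prod_dvd_coprime:
  fixes q :: "'i \<Rightarrow> nat"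
  assumes "finite I" "\<And>i j. i \<in> I \<Longrightarrow> j \<in> I \<Longrightarrow> i \<noteq> j \<Longrightarrow> coprime (q i) (q j)"
    "\<And>i. i \<in> I \<Longrightarrow> q i dvd y"
  shows "prod q I dvd y"
  using assms
proof (induction I rule: finite_induct)
  case empty then show ?case by simp
next
  case (insert i I)
  have "coprime (q i) (prod q I)"
    using insert by (intro prod_coprime_right) auto
  moreover have "prod q I dvd y" using insert by auto
  moreover have "q i dvd y" using insert by auto
  ultimately show ?case using insert by (simp add: divides_mult)
qed

lemma N_dvd_iff:
  fixes p n :: "nat \<Rightarrow> nat" and x :: int
  assumes pr: "\<forall>i\<in>{1..k}. Factorial_Ring.prime (p i)" and inj: "inj_on p {1..k}"
    and nn: "\<forall>i\<in>{1..k}. n i \<ge> 1" and N: "N = (\<Prod>i=1..k. p i ^ n i)"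
  shows "int N dvd x \<longleftrightarrow> (\<forall>i\<in>{1..k}. int (p i ^ n i) dvd x)"
proof
  assume "int N dvd x"
  moreover have "int (p i ^ n i) dvd int N" if "i \<in> {1..k}" for i
    unfolding int_dvd_int_iff N using that by (intro dvd_prodI) auto
  ultimately show "\<forall>i\<in>{1..k}. int (p i ^ n i) dvd x" by (meson dvd_trans)
next
  assume a: "\<forall>i\<in>{1..k}. int (p i ^ n i) dvd x"
  have "(\<Prod>i=1..k. p i ^ n i) dvd nat \<bar>x\<bar>"
  proof (rule prod_dvd_coprime)
    fix i j assume ij: "i \<in> {1..k}" "j \<in> {1..k}" "i \<noteq> j"
    then have "p i \<noteq> p j" using inj unfolding inj_on_def by blast
    then have "coprime (p i) (p j)" using pr ij by (intro primes_coprime) auto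
    then show "coprime (p i ^ n i) (p j ^ n j)" by simp
  next
    fix i assume "i \<in> {1..k}"
    then show "p i ^ n i dvd nat \<bar>x\<bar>" using a dvd_nat_abs_iff by blast
  qed simp
  then show "int N dvd x" unfolding N by (simp only: dvd_nat_abs_iff)
qed

context comm_group
begin

lemma M_PR_iff_PRH: "M_PR G M E \<longleftrightarrow> PRH G M {\<one>} E"
  unfolding M_PR_def PRH_def using circ_hom_one by auto

lemma Gamma_pm_char:
  assumes p: "Factorial_Ring.prime p" and m: "m \<ge> 1"
  shows "x \<in> Gamma_pm G p m \<longleftrightarrow> x \<in> carrier G \<and> (\<exists>t. \<not> p dvd t \<and> x [^] (t * p ^ (m - 1)) = \<one>)"
proof
  assume x: "x \<in> Gamma_pm G p m"
  then have xc: "x \<in> carrier G" and o0: "ord x \<noteq> 0" and nd: "\<not> p ^ m dvd ord x"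
    unfolding Gamma_pm_def torsion_subgroup_def by auto
  obtain t where t: "ord x = p ^ multiplicity p (ord x) * t" "\<not> p dvd t"
    using multiplicity_decompose'[of "ord x" p] o0 p not_prime_unit by blast
  have "multiplicity p (ord x) < m"
  proof (rule ccontr)
    assume "\<not> multiplicity p (ord x) < m"
    then have "p ^ m dvd p ^ multiplicity p (ord x)" by (simp add: le_imp_power_dvd)
    moreover have "p ^ multiplicity p (ord x) dvd ord x" using t(1) by (metis dvd_triv_left)
    ultimately have "p ^ m dvd ord x" by (rule dvd_trans)
    then show False using nd by simp
  qed
  then have "p ^ multiplicity p (ord x) dvd p ^ (m - 1)" by (intro le_imp_power_dvd) simp
  then have "p ^ multiplicity p (ord x) * t dvd p ^ (m - 1) * t" by (rule mult_dvd_mono) simp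
  then have "ord x dvd p ^ (m - 1) * t" by (subst t(1))
  then have "ord x dvd t * p ^ (m - 1)" unfolding mult.commute[of "p ^ (m - 1)" t] .
  then have "x [^] (t * p ^ (m - 1)) = \<one>" using xc by (simp add: pow_eq_id)
  then show "x \<in> carrier G \<and> (\<exists>t. \<not> p dvd t \<and> x [^] (t * p ^ (m - 1)) = \<one>)" using xc t(2) by blast
next
  assume "x \<in> carrier G \<and> (\<exists>t. \<not> p dvd t \<and> x [^] (t * p ^ (m - 1)) = \<one>)"
  then obtain t where xc: "x \<in> carrier G" and t: "\<not> p dvd t" "x [^] (t * p ^ (m - 1)) = \<one>" by blast
  have od: "ord x dvd t * p ^ (m - 1)" using t(2) xc by (simp add: pow_eq_id)
  have t0: "t \<noteq> 0"
  proof
    assume "t = 0" then show False using t(1) by simp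
  qed
  have p0: "p > 0" using p prime_gt_0_nat by blast
  have "ord x \<noteq> 0"
  proof
    assume "ord x = 0"
    then have "t * p ^ (m - 1) = 0" using od by simp
    then show False using t0 p0 by simp
  qed
  moreover have "\<not> p ^ m dvd ord x"
  proof
    assume "p ^ m dvd ord x"
    then have "p ^ m dvd t * p ^ (m - 1)" using od by (rule dvd_trans)
    moreover have "p ^ m = p ^ (m - 1) * p" using m by (metis Suc_diff_1 le_less_trans less_one not_le power_Suc2)
    ultimately have "p ^ (m - 1) * p dvd p ^ (m - 1) * t" by (simp add: mult.commute)
    then have "p dvd t" using p0 by (simp add: nat_mult_dvd_cancel1)
    then show False using t(1) by simp
  qed
  ultimately show "x \<in> Gamma_pm G p m" unfolding Gamma_pm_def torsion_subgroup_def using xc by auto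
qed

lemma Gamma_pm_subgroup:
  assumes p: "Factorial_Ring.prime p" and m: "m \<ge> 1"
  shows "subgroup (Gamma_pm G p m) G"
proof (rule subgroupI)
  note ch = Gamma_pm_char[OF p m]
  show "Gamma_pm G p m \<subseteq> carrier G" using ch by blast
  have "\<one> \<in> Gamma_pm G p m" unfolding ch using p
    by (intro conjI one_closed exI[of _ 1]) (auto simp: prime_gt_1_nat)
  then show "Gamma_pm G p m \<noteq> {}" by blast
next
  note ch = Gamma_pm_char[OF p m]
  fix a assume "a \<in> Gamma_pm G p m"
  then obtain t where a: "a \<in> carrier G" "\<not> p dvd t" "a [^] (t * p ^ (m - 1)) = \<one>" unfolding ch by blast
  have "inv a [^] (t * p ^ (m - 1)) = \<one>" using a by (simp add: nat_pow_inv)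
  then show "inv a \<in> Gamma_pm G p m" unfolding ch using a by blast
next
  note ch = Gamma_pm_char[OF p m]
  fix a b assume "a \<in> Gamma_pm G p m" "b \<in> Gamma_pm G p m"
  then obtain t s where a: "a \<in> carrier G" "\<not> p dvd t" "a [^] (t * p ^ (m - 1)) = \<one>"
    and b: "b \<in> carrier G" "\<not> p dvd s" "b [^] (s * p ^ (m - 1)) = \<one>" unfolding ch by blast
  have "a [^] (t * s * p ^ (m - 1)) = (a [^] (t * p ^ (m - 1))) [^] s"
    using a(1) by (simp add: nat_pow_pow mult_ac)
  then have 1: "a [^] (t * s * p ^ (m - 1)) = \<one>" using a(3) by simp
  have "b [^] (t * s * p ^ (m - 1)) = (b [^] (s * p ^ (m - 1))) [^] t"
    using b(1) by (simp add: nat_pow_pow mult_ac)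
  then have 2: "b [^] (t * s * p ^ (m - 1)) = \<one>" using b(3) by simp
  have "(a \<otimes> b) [^] (t * s * p ^ (m - 1)) = \<one>" using a(1) b(1) 1 2 by (simp add: nat_pow_distrib)
  moreover have "\<not> p dvd t * s" using a(2) b(2) p by (simp add: prime_dvd_mult_iff)
  ultimately show "a \<otimes> b \<in> Gamma_pm G p m" unfolding ch using a(1) b(1) by blast
qed

end



context comm_group
begin

lemma Rel_pm_imp_Rel_p:
  assumes p: "Factorial_Ring.prime p" and m: "m \<ge> 1" and E: "E \<subseteq> carrier G"
    and R: "Rel G (p ^ m) {\<one>} E"
  shows "Rel G p (Gamma_pm G p m) E"
  unfolding Rel_def
proof (intro allI impI)
  fix a g assume fa: "fsE E a" and aH: "lc G a \<in> Gamma_pm G p m"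
  define y where "y = lc G a"
  have yc: "y \<in> carrier G" unfolding y_def using lc_closed[OF fa E] .
  have o0: "ord y \<noteq> 0" and nd: "\<not> p ^ m dvd ord y"
    using aH unfolding y_def Gamma_pm_def torsion_subgroup_def by auto
  have "lc G (\<lambda>x. int (ord y) * a x) = y [^] int (ord y)" unfolding y_def by (rule lc_smult[OF fa E])
  also have "\<dots> = \<one>" using yc by (simp add: int_pow_int)
  finally have "lc G (\<lambda>x. int (ord y) * a x) \<in> {\<one>}" by simp
  moreover have "fsE E (\<lambda>x. int (ord y) * a x)" using fsE_smult[OF fa] .
  ultimately have dv: "int (p ^ m) dvd int (ord y) * a g" using R unfolding Rel_def by blast
  show "int p dvd a g"
  proof (rule ccontr)
    assume nd2: "\<not> int p dvd a g"
    have pi: "Factorial_Ring.prime (int p)" using p by simp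
    have "coprime (int p) (a g)" using prime_imp_coprime[OF pi nd2] .
    then have "coprime (int (p ^ m)) (a g)" by simp
    then have "int (p ^ m) dvd int (ord y)" using dv coprime_dvd_mult_left_iff by blast
    then have "p ^ m dvd ord y" by (simp only: int_dvd_int_iff)
    then show False using nd by simp
  qed
qed

lemma Rel_p_imp_Rel_pm:
  assumes p: "Factorial_Ring.prime p" and m: "m \<ge> 1" and E: "E \<subseteq> carrier G"
    and R: "Rel G p (Gamma_pm G p m) E"
  shows "Rel G (p ^ m) {\<one>} E"
  unfolding Rel_def
proof (intro allI impI)
  fix a g assume fa: "fsE E a" and a1: "lc G a \<in> {\<one>}"
  have p1: "p > 1" using p prime_gt_1_nat by blast
  have "\<forall>g. int (p ^ j) dvd a g" if "j \<le> m" for j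
    using that
  proof (induction j)
    case 0 then show ?case by simp
  next
    case (Suc j)
    then have IH: "\<forall>g. int (p ^ j) dvd a g" and jm: "j < m" by auto
    define b where "b x = a x div int (p ^ j)" for x
    have ab: "a x = int (p ^ j) * b x" for x unfolding b_def using IH by simp
    have aeq: "a = (\<lambda>x. int (p ^ j) * b x)" using ab by auto
    have "isupp b \<subseteq> isupp a" unfolding isupp_def using ab p1 by auto
    then have fb: "fsE E b" using fa finite_subset unfolding fsE_def by blast
    have bc: "lc G b \<in> carrier G" using lc_closed[OF fb E] .
    have "lc G a = lc G b [^] int (p ^ j)" unfolding aeq by (rule lc_smult[OF fb E])
    also have "\<dots> = lc G b [^] (p ^ j)" by (rule int_pow_int)
    finally have "lc G b [^] (p ^ j) = \<one>" using a1 by simp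
    then have od: "ord (lc G b) dvd p ^ j" using bc by (simp add: pow_eq_id)
    have "ord (lc G b) \<noteq> 0"
    proof
      assume "ord (lc G b) = 0"
      then have "p ^ j = 0" using od by simp
      then show False using p1 by simp
    qed
    moreover have "\<not> p ^ m dvd ord (lc G b)"
    proof
      assume "p ^ m dvd ord (lc G b)"
      then have "p ^ m dvd p ^ j" using od by (rule dvd_trans)
      then have "p ^ m \<le> p ^ j" using p1 by (intro dvd_imp_le) auto
      then have "m \<le> j" by (rule power_le_imp_le_exp[OF p1])
      then show False using jm by simp
    qed
    ultimately have "lc G b \<in> Gamma_pm G p m" unfolding Gamma_pm_def torsion_subgroup_def using bc by auto
    then have "\<forall>g. int p dvd b g" using R fb unfolding Rel_def by blast
    then show ?case
    proof (intro allI)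
      fix g assume "\<forall>g. int p dvd b g"
      then have "int (p ^ j) * int p dvd int (p ^ j) * b g" by (simp add: mult_dvd_mono)
      then show "int (p ^ Suc j) dvd a g" using ab[of g] by (simp add: mult.commute)
    qed
  qed
  then show "int (p ^ m) dvd a g" by blast
qed

lemma Rel_pm_iff:
  assumes p: "Factorial_Ring.prime p" and m: "m \<ge> 1" and E: "E \<subseteq> carrier G"
  shows "Rel G (p ^ m) {\<one>} E \<longleftrightarrow> Rel G p (Gamma_pm G p m) E"
  using Rel_pm_imp_Rel_p Rel_p_imp_Rel_pm assms by blast

lemma Rel_imp_inj:
  assumes p: "Factorial_Ring.prime p" and H: "subgroup H G" and E: "E \<subseteq> carrier G"
    and R: "Rel G p H E"
  shows "inj_on (\<lambda>x. H #> x) E"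
proof (rule inj_onI, rule ccontr)
  fix x y assume x: "x \<in> E" and y: "y \<in> E" and eq: "H #> x = H #> y" and ne: "x \<noteq> y"
  have xc: "x \<in> carrier G" and yc: "y \<in> carrier G" using x y E by auto
  have "x \<in> H #> y" using rcos_self[OF xc H] eq by simp
  then have xyH: "x \<otimes> inv y \<in> H" using subgroup.rcos_module_imp[OF H is_group yc] by blast
  define sx where "sx = (\<lambda>z. if z = x then (1::int) else 0)"
  define sy where "sy = (\<lambda>z. if z = y then (1::int) else 0)"
  have fx: "fsE E sx" unfolding sx_def using fsE_single[OF x] .
  have fy: "fsE E sy" unfolding sy_def using fsE_single[OF y] .
  have fny: "fsE E (\<lambda>z. - sy z)" using fsE_neg[OF fy] .
  have "lc G (\<lambda>z. sx z + - sy z) = lc G sx \<otimes> lc G (\<lambda>z. - sy z)" by (rule lc_add[OF fx fny E])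
  also have "\<dots> = x \<otimes> inv y" unfolding lc_neg[OF fy E] unfolding sx_def sy_def
    using lc_single xc yc by simp
  finally have "lc G (\<lambda>z. sx z + - sy z) \<in> H" using xyH by simp
  moreover have "fsE E (\<lambda>z. sx z + - sy z)" using fsE_add[OF fx fny] .
  ultimately have "int p dvd sx x + - sy x" using R unfolding Rel_def by blast
  then have "int p dvd 1" using ne unfolding sx_def sy_def by simp
  then have "p = 1" by simp
  then show False using p by simp
qed

lemma PRH_imp_M_PR_quot:
  assumes H: "subgroup H G" and E: "E \<subseteq> carrier G" and P: "PRH G M H E"
  shows "M_PR (G Mod H) M ((\<lambda>x. H #> x) ` E)"
  unfolding M_PR_def
proof (intro ballI)
  fix \<psi> assume \<psi>: "\<psi> \<in> (\<lambda>x. H #> x) ` E \<rightarrow> roots_of_unity M"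
  define \<phi> where "\<phi> x = \<psi> (H #> x)" for x
  have "\<phi> \<in> E \<rightarrow> roots_of_unity M" using \<psi> unfolding \<phi>_def by auto
  then obtain c where c: "c \<in> hom G circle_group" "\<forall>h\<in>H. c h = 1" "\<forall>g\<in>E. c g = \<phi> g"
    using P unfolding PRH_def by blast
  have N: "H \<lhd> G" using subgroup_imp_normal[OF H] .
  define c' where "c' C = c (SOME x. x \<in> carrier G \<and> C = H #> x)" for C
  have key: "c' (H #> x) = c x" if xc: "x \<in> carrier G" for x
  proof -
    define y where "y = (SOME y. y \<in> carrier G \<and> H #> x = H #> y)"
    have ex: "\<exists>y. y \<in> carrier G \<and> H #> x = H #> y" using xc by blast
    have "y \<in> carrier G \<and> H #> x = H #> y" unfolding y_def using someI_ex[OF ex] .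
    then have yc: "y \<in> carrier G" and eq: "H #> x = H #> y" by auto
    have "x \<in> H #> y" using rcos_self[OF xc H] eq by simp
    then have "x \<otimes> inv y \<in> H" using subgroup.rcos_module_imp[OF H is_group yc] by blast
    then have "c (x \<otimes> inv y) = 1" using c(2) by blast
    then have "c x * inverse (c y) = 1" using hom_circleD(2)[OF c(1) xc inv_closed[OF yc]] circ_hom_inv[OF c(1) yc] by simp
    moreover have "c y \<noteq> 0" using hom_circleD(1)[OF c(1) yc] by auto
    ultimately have "c x = c y" by (simp add: field_simps)
    then show ?thesis unfolding c'_def y_def by simp
  qed
  have carr: "C \<in> carrier (G Mod H) \<longleftrightarrow> (\<exists>x\<in>carrier G. C = H #> x)" for C
    unfolding carrier_FactGroup by auto
  have "c' \<in> hom (G Mod H) circle_group"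
    unfolding hom_circle_iff
  proof (intro conjI ballI)
    fix C assume "C \<in> carrier (G Mod H)"
    then obtain x where x: "x \<in> carrier G" "C = H #> x" using carr[of C] by blast
    then show "cmod (c' C) = 1" using key hom_circleD(1)[OF c(1)] by simp
  next
    fix C D assume "C \<in> carrier (G Mod H)" "D \<in> carrier (G Mod H)"
    then obtain x y where x: "x \<in> carrier G" "C = H #> x" and y: "y \<in> carrier G" "D = H #> y"
      using carr[of C] carr[of D] by blast
    have "C \<otimes>\<^bsub>G Mod H\<^esub> D = H #> (x \<otimes> y)" using x y normal.rcos_sum[OF N] by simp
    then show "c' (C \<otimes>\<^bsub>G Mod H\<^esub> D) = c' C * c' D"
      using x y key hom_circleD(2)[OF c(1) x(1) y(1)] by simp
  qed
  moreover have "\<forall>C\<in>(\<lambda>x. H #> x) ` E. c' C = \<psi> C"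
    using key c(3) E unfolding \<phi>_def by auto
  ultimately show "\<exists>c\<in>hom (G Mod H) circle_group. \<forall>C\<in>(\<lambda>x. H #> x) ` E. c C = \<psi> C" by blast
qed

lemma M_PR_quot_imp_PRH:
  assumes H: "subgroup H G" and E: "E \<subseteq> carrier G" and inj: "inj_on (\<lambda>x. H #> x) E"
    and P: "M_PR (G Mod H) M ((\<lambda>x. H #> x) ` E)"
  shows "PRH G M H E"
  unfolding PRH_def
proof (intro ballI)
  fix \<phi> assume \<phi>: "\<phi> \<in> E \<rightarrow> roots_of_unity M"
  define \<psi> where "\<psi> C = \<phi> (the_inv_into E (\<lambda>x. H #> x) C)" for C
  have \<psi>v: "\<psi> (H #> g) = \<phi> g" if "g \<in> E" for g
    unfolding \<psi>_def using the_inv_into_f_f[OF inj that] by simp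
  have "\<psi> \<in> (\<lambda>x. H #> x) ` E \<rightarrow> roots_of_unity M" using \<phi> \<psi>v by auto
  then obtain c' where c': "c' \<in> hom (G Mod H) circle_group" "\<forall>C\<in>(\<lambda>x. H #> x) ` E. c' C = \<psi> C"
    using P unfolding M_PR_def by blast
  have N: "H \<lhd> G" using subgroup_imp_normal[OF H] .
  have QG: "group (G Mod H)" using normal.factorgroup_is_group[OF N] .
  have inQ: "H #> x \<in> carrier (G Mod H)" if "x \<in> carrier G" for x
    unfolding carrier_FactGroup using that by auto
  define c where "c x = c' (H #> x)" for x
  have "c \<in> hom G circle_group"
    unfolding hom_circle_iff
  proof (intro conjI ballI)
    fix x assume "x \<in> carrier G"
    then show "cmod (c x) = 1" unfolding c_def using c'(1) inQ unfolding hom_circle_iff by blast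
  next
    fix x y assume x: "x \<in> carrier G" and y: "y \<in> carrier G"
    have "H #> (x \<otimes> y) = (H #> x) \<otimes>\<^bsub>G Mod H\<^esub> (H #> y)" using x y normal.rcos_sum[OF N] by simp
    then show "c (x \<otimes> y) = c x * c y"
      unfolding c_def using c'(1) inQ[OF x] inQ[OF y] unfolding hom_circle_iff by simp
  qed
  moreover have "\<forall>h\<in>H. c h = 1"
  proof
    fix h assume h: "h \<in> H"
    have "H #> h = H" using subgroup.rcos_const[OF H is_group h] .
    then have "c h = c' \<one>\<^bsub>G Mod H\<^esub>" unfolding c_def by simp
    also have "\<dots> = 1" using hom_circle_one_gen[OF group.is_monoid[OF QG] c'(1)] .
    finally show "c h = 1" .
  qed
  moreover have "\<forall>g\<in>E. c g = \<phi> g" using c'(2) \<psi>v unfolding c_def by auto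
  ultimately show "\<exists>c\<in>hom G circle_group. (\<forall>h\<in>H. c h = 1) \<and> (\<forall>g\<in>E. c g = \<phi> g)" by blast
qed

end

theorem corollary3p4:
  fixes \<Gamma> :: "('a, 'b) monoid_scheme"
    and N k :: nat and p n :: "nat \<Rightarrow> nat" and E :: "'a set"
  assumes "comm_group \<Gamma>"
    and "\<forall>i\<in>{1..k}. Factorial_Ring.prime (p i)"
    and "inj_on p {1..k}"
    and "\<forall>i\<in>{1..k}. n i \<ge> 1"
    and "N = (\<Prod>i=1..k. p i ^ n i)"
    and "E \<subseteq> carrier \<Gamma>"
  shows "M_PR \<Gamma> N E \<longleftrightarrow>
    (\<forall>i\<in>{1..k}. inj_on (pi_pm \<Gamma> (p i) (n i)) E \<and>
       M_PR (\<Gamma> Mod Gamma_pm \<Gamma> (p i) (n i)) (p i) (pi_pm \<Gamma> (p i) (n i) ` E))"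
proof -
  interpret comm_group \<Gamma> by fact
  note pr = assms(2) and nn = assms(4) and E = assms(6)
  have N0: "N > 0" unfolding assms(5) using pr by (auto intro!: prod_pos simp: prime_gt_0_nat)
  have pip: "pi_pm \<Gamma> q m = (\<lambda>x. Gamma_pm \<Gamma> q m #>\<^bsub>\<Gamma>\<^esub> x)" for q m
    by (rule ext) (simp add: pi_pm_def)
  have "M_PR \<Gamma> N E \<longleftrightarrow> Rel \<Gamma> N {\<one>\<^bsub>\<Gamma>\<^esub>} E"
    using M_PR_iff_PRH PRH_iff_Rel[OF E N0 triv_subgroup] by simp
  also have "\<dots> \<longleftrightarrow> (\<forall>i\<in>{1..k}. Rel \<Gamma> (p i ^ n i) {\<one>\<^bsub>\<Gamma>\<^esub>} E)"
    unfolding Rel_def using N_dvd_iff[OF assms(2-5)] by blast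
  also have "\<dots> \<longleftrightarrow> (\<forall>i\<in>{1..k}. Rel \<Gamma> (p i) (Gamma_pm \<Gamma> (p i) (n i)) E)"
    using Rel_pm_iff[OF _ _ E] pr nn by simp
  also have "\<dots> \<longleftrightarrow> (\<forall>i\<in>{1..k}. inj_on (pi_pm \<Gamma> (p i) (n i)) E \<and>
       M_PR (\<Gamma> Mod Gamma_pm \<Gamma> (p i) (n i)) (p i) (pi_pm \<Gamma> (p i) (n i) ` E))"
  proof (intro ball_cong refl)
    fix i assume i: "i \<in> {1..k}"
    have p: "Factorial_Ring.prime (p i)" using pr i by blast
    have p0: "p i > 0" using p prime_gt_0_nat by blast
    have H: "subgroup (Gamma_pm \<Gamma> (p i) (n i)) \<Gamma>" using Gamma_pm_subgroup[OF p] nn i by blast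
    show "Rel \<Gamma> (p i) (Gamma_pm \<Gamma> (p i) (n i)) E \<longleftrightarrow> inj_on (pi_pm \<Gamma> (p i) (n i)) E \<and>
       M_PR (\<Gamma> Mod Gamma_pm \<Gamma> (p i) (n i)) (p i) (pi_pm \<Gamma> (p i) (n i) ` E)"
      unfolding pip
      using Rel_imp_inj[OF p H E] PRH_imp_M_PR_quot[OF H E] M_PR_quot_imp_PRH[OF H E]
        PRH_iff_Rel[OF E p0 H] by blast
  qed
  finally show ?thesis .
qed


end
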